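(* Let $\mathbf m_1,\mathbf m_2,\mathbf m_3\in\mathbb R^3$ and $t_1,t_2,t_3,t_4\in\mathbb R$, and let $$\mathbf A_1=\begin{bmatrix}\mathbf m_1^T & t_1\\ \mathbf m_3^T & t_3\end{bmatrix},\qquad \mathbf A_2=\begin{bmatrix}\mathbf m_2^T & t_2\\ \mathbf m_3^T & t_4\end{bmatrix},$$ where $\mathbf m_1,\mathbf m_3$ are linearly independent and $\mathbf m_2,\mathbf m_3$ are linearly independent. Then there exist unique upper-triangular $2\times 2$ real matrices $\mathbf K_1,\mathbf K_2$ with positive diagonal entries, unique unit vectors $\mathbf r_1,\mathbf r_2,\mathbf r_3\in\mathbb R^3$ with $\mathbf r_3\cdot\mathbf r_1=\mathbf r_3\cdot\mathbf r_2=0$, and unique reals $t_1',t_2',t_3',t_4'$ such that $$\mathbf A_1=\mathbf K_1\begin{bmatrix}\mathbf r_1^T & t_1'\\ \mathbf r_3^T & t_3'\end{bmatrix},\qquad \mathbf A_2=\mathbf K_2\begin{bmatrix}\mathbf r_2^T & t_2'\\ \mathbf r_3^T & t_4'\end{bmatrix}.$$ Moreover, if in addition the null spaces of $\mathbf A_1$ and $\mathbf A_2$ (the two slits, viewed as lines in $\mathbb P^3$) are skew lines with finite points, then: the angle between the direction vectors $\mathbf r_1\times\mathbf r_3$ and $\mathbf r_2\times\mathbf r_3$ of the two slits is $\theta=\arccos(\mathbf r_1\cdot\mathbf r_2)$, and the euclidean distance between the two slits is $|t_4'-t_3'|$.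
   Context: A pair $(\mathbf A_1,\mathbf A_2)$ of $2\times 4$ matrices represents a two-slit camera $\mathbb P^3\dashrightarrow\mathbb P^2$, $\mathbf x\mapsto\big(\mathbf a_1^T\mathbf x/\mathbf a_2^T\mathbf x,\ \mathbf b_1^T\mathbf x/\mathbf b_2^T\mathbf x,\ 1\big)$, where $\mathbf a_1,\mathbf a_2$ are the rows of $\mathbf A_1$ and $\mathbf b_1,\mathbf b_2$ the rows of $\mathbf A_2$; its slits are the lines in $\mathbb P^3$ given by the null spaces of $\mathbf A_1$ and $\mathbf A_2$. A camera with matrices of the displayed form (sharing $\mathbf m_3$ in the second rows) is called a parallel two-slit camera. Points of $\mathbb R^3$ are identified with $(X_1,X_2,X_3,1)^T\in\mathbb P^3$ with the standard euclidean metric. *)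

theory Defs
  imports "HOL-Analysis.Analysis"
begin

definition ext4 :: "real^3 \<Rightarrow> real \<Rightarrow> real^4" where
  "ext4 v t = vector [v$1, v$2, v$3, t]"

definition cam_mat :: "real^3 \<Rightarrow> real \<Rightarrow> real^3 \<Rightarrow> real \<Rightarrow> real^4^2" where
  "cam_mat u a w b = vector [ext4 u a, ext4 w b]"

definition lin_indep2 :: "real^3 \<Rightarrow> real^3 \<Rightarrow> bool" where
  "lin_indep2 u v \<longleftrightarrow> (\<forall>a b. a *\<^sub>R u + b *\<^sub>R v = 0 \<longrightarrow> a = 0 \<and> b = 0)"

definition upper_pos :: "real^2^2 \<Rightarrow> bool" where
  "upper_pos K \<longleftrightarrow> K$2$1 = 0 \<and> K$1$1 > 0 \<and> K$2$2 > 0"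

text \<open>Null space of a 2x4 matrix (the slit, as a 2-dim subspace of R^4, i.e. a line in P^3).\<close>
definition null_space :: "real^4^2 \<Rightarrow> (real^4) set" where
  "null_space A = {x. A *v x = 0}"

definition finite_pts :: "real^4^2 \<Rightarrow> (real^3) set" where
  "finite_pts A = {X. A *v ext4 X 1 = 0}"

text \<open>Two projective lines (given as subspaces) are skew: they share no projective point.\<close>
definition skew_slits :: "real^4^2 \<Rightarrow> real^4^2 \<Rightarrow> bool" where
  "skew_slits A B \<longleftrightarrow> null_space A \<inter> null_space B = {0}"

definition vec_angle :: "real^3 \<Rightarrow> real^3 \<Rightarrow> real" where
  "vec_angle u v = arccos ((u \<bullet> v) / (norm u * norm v))"

end

theory Submission
  imports Defs
begin

lemma ext4_nth[simp]: "ext4 v t $ 1 = v$1" "ext4 v t $ 2 = v$2" "ext4 v t $ 3 = v$3" "ext4 v t $ 4 = t"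
  unfolding ext4_def vector_def by simp_all

lemma ext4_eq: "ext4 v t = ext4 v' t' \<longleftrightarrow> v = v' \<and> t = t'"
  by (auto simp: vec_eq_iff forall_4 forall_3)

lemma cam_nth[simp]: "cam_mat u a w b $ 1 = ext4 u a" "cam_mat u a w b $ 2 = ext4 w b"
  unfolding cam_mat_def by simp_all

lemma cam_eq:
  "cam_mat u a w b = K ** cam_mat r s r' s' \<longleftrightarrow>
    u = K$1$1 *\<^sub>R r + K$1$2 *\<^sub>R r' \<and> a = K$1$1 * s + K$1$2 * s' \<and>
    w = K$2$1 *\<^sub>R r + K$2$2 *\<^sub>R r' \<and> b = K$2$1 * s + K$2$2 * s'"
  unfolding vec_eq_iff[of "cam_mat u a w b"] forall_2 matrix_matrix_mult_def
  by (simp add: sum_2 vec_eq_iff forall_4 forall_3 del: ext4_nth cam_nth) (simp add: conj_ac)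

lemma cam_mulv: "cam_mat u a w b *v ext4 X c = vector [u \<bullet> X + a * c, w \<bullet> X + b * c]"
  by (simp add: vec_eq_iff forall_2 matrix_vector_mult_def sum_4 inner_vec_def sum_3)

lemma cam_mulv0: "cam_mat u a w b *v ext4 X c = 0 \<longleftrightarrow> u \<bullet> X + a * c = 0 \<and> w \<bullet> X + b * c = 0"
  by (simp add: cam_mulv vec_eq_iff forall_2)

lemma one_cam:
  fixes m w r r' :: "real^3" and a b s s' :: real and K :: "real^2^2"
  assumes li: "lin_indep2 m w"
  defines "R3 \<equiv> (1 / norm w) *\<^sub>R w" 
  defines "k \<equiv> m \<bullet> R3"
  defines "n1 \<equiv> norm (m - k *\<^sub>R R3)"
  defines "R1 \<equiv> (1 / n1) *\<^sub>R (m - k *\<^sub>R R3)"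
  defines "S3 \<equiv> b / norm w"
  defines "S1 \<equiv> (a - k * S3) / n1"
  defines "KK \<equiv> (vector [vector [n1, k], vector [0, norm w]] :: real^2^2)"
  shows "(upper_pos K \<and> norm r = 1 \<and> norm r' = 1 \<and> r' \<bullet> r = 0 \<and>
          cam_mat m a w b = K ** cam_mat r s r' s') \<longleftrightarrow>
         (K = KK \<and> r = R1 \<and> r' = R3 \<and> s = S1 \<and> s' = S3)"
proof -
  have w0: "w \<noteq> 0" using li unfolding lin_indep2_def
    by (metis add_0 one_neq_zero scaleR_one scaleR_zero_left)
  hence nw: "norm w > 0" by simp
  have nR3: "norm R3 = 1" using nw by (simp add: R3_def)
  have p0: "m - k *\<^sub>R R3 \<noteq> 0"
  proof
    assume "m - k *\<^sub>R R3 = 0"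
    hence "1 *\<^sub>R m + (- (k / norm w)) *\<^sub>R w = 0" by (simp add: R3_def)
    thus False using li unfolding lin_indep2_def by fastforce
  qed
  hence n1p: "n1 > 0" by (simp add: n1_def)
  have nR1: "norm R1 = 1" using n1p by (simp add: R1_def n1_def)
  have RR: "R3 \<bullet> R3 = 1" using nR3 by (simp add: norm_eq_1)
  have orth: "R3 \<bullet> R1 = 0" unfolding R1_def
    by (simp add: inner_diff_right RR k_def inner_commute)
  have m_eq: "m = n1 *\<^sub>R R1 + k *\<^sub>R R3" using n1p by (simp add: R1_def)
  have w_eq: "w = norm w *\<^sub>R R3" using nw by (simp add: R3_def)
  show ?thesis
  proof
    assume H: "upper_pos K \<and> norm r = 1 \<and> norm r' = 1 \<and> r' \<bullet> r = 0 \<and>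
          cam_mat m a w b = K ** cam_mat r s r' s'"
    hence up: "K$2$1 = 0" "K$1$1 > 0" "K$2$2 > 0" and nr: "norm r = 1" "norm r' = 1"
      and o: "r' \<bullet> r = 0" by (auto simp: upper_pos_def)
    from H have e: "m = K$1$1 *\<^sub>R r + K$1$2 *\<^sub>R r'" "a = K$1$1 * s + K$1$2 * s'"
      "w = K$2$2 *\<^sub>R r'" "b = K$2$2 * s'" by (auto simp: cam_eq up)
    have K22: "K$2$2 = norm w" using e(3) nr up by simp
    have r': "r' = R3" unfolding R3_def using nw by (subst e(3)) (simp add: K22)
    have s': "s' = S3" using e(4) K22 nw by (simp add: S3_def)
    have r'r': "r' \<bullet> r' = 1" using nr by (simp add: norm_eq_1)
    have K12: "K$1$2 = k" unfolding k_def using e(1) r' o r'r'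
      by (simp add: inner_add_left inner_commute[of r R3])
    have mk: "m - k *\<^sub>R R3 = K$1$1 *\<^sub>R r" using e(1) K12 r' by simp
    have K11: "K$1$1 = n1" unfolding n1_def mk using nr up by simp
    have r: "r = R1" unfolding R1_def mk K11[symmetric] using up by simp
    have s: "s = S1" unfolding S1_def using e(2) K11 K12 s' n1p by (simp add: field_simps)
    have "K = KK" unfolding KK_def using K11 K12 K22 up
      by (simp add: vec_eq_iff forall_2)
    thus "K = KK \<and> r = R1 \<and> r' = R3 \<and> s = S1 \<and> s' = S3" using r r' s s' by simp
  next
    assume "K = KK \<and> r = R1 \<and> r' = R3 \<and> s = S1 \<and> s' = S3"
    hence E: "K = KK" "r = R1" "r' = R3" "s = S1" "s' = S3" by auto
    have "cam_mat m a w b = K ** cam_mat r s r' s'"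
      unfolding cam_eq E KK_def using m_eq w_eq n1p nw
      by (simp add: S1_def S3_def field_simps)
    thus "upper_pos K \<and> norm r = 1 \<and> norm r' = 1 \<and> r' \<bullet> r = 0 \<and>
          cam_mat m a w b = K ** cam_mat r s r' s'"
      using E nR1 nR3 orth n1p nw by (simp add: upper_pos_def KK_def)
  qed
qed

lemma one_cam':
  fixes m w :: "real^3" and a b :: real
  assumes li: "lin_indep2 m w"
  shows "\<exists>KK R1 S1. \<forall>K r r' s s'. (upper_pos K \<and> norm r = 1 \<and> norm r' = 1 \<and> r' \<bullet> r = 0 \<and>
          cam_mat m a w b = K ** cam_mat r s r' s') \<longleftrightarrow>
         (K = KK \<and> r = R1 \<and> r' = (1 / norm w) *\<^sub>R w \<and> s = S1 \<and> s' = b / norm w)"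
  apply (intro exI allI)
  apply (rule one_cam[OF li])
  done

lemma upper_mulv0: "upper_pos K \<Longrightarrow> (K *v y = 0 \<longleftrightarrow> y = 0)"
  by (auto simp: upper_pos_def vec_eq_iff forall_2 matrix_vector_mult_def sum_2)

lemma ns_eq: "upper_pos K \<Longrightarrow> A = K ** B \<Longrightarrow> (A *v x = 0 \<longleftrightarrow> B *v x = 0)"
  by (simp add: matrix_vector_mul_assoc[symmetric] upper_mulv0)

lemma fp_eq: "upper_pos K \<Longrightarrow> A = K ** cam_mat r s r' s' \<Longrightarrow>
   finite_pts A = {X. r \<bullet> X + s = 0 \<and> r' \<bullet> X + s' = 0}"
  unfolding finite_pts_def by (simp add: ns_eq cam_mulv0)

lemma ns_mem: "upper_pos K \<Longrightarrow> A = K ** cam_mat r s r' s' \<Longrightarrow> r \<bullet> d = 0 \<Longrightarrow> r' \<bullet> d = 0 \<Longrightarrow>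
   ext4 d 0 \<in> null_space A"
  unfolding null_space_def by (simp add: ns_eq cam_mulv0)

lemma ext4_nz: "d \<noteq> 0 \<Longrightarrow> ext4 d 0 \<noteq> 0"
  by (auto simp: vec_eq_iff forall_3 forall_4)

lemma norm_cross1: "norm r = 1 \<Longrightarrow> norm r' = 1 \<Longrightarrow> r \<bullet> r' = 0 \<Longrightarrow> norm (cross3 r r') = 1"
  using norm_cross_dot[of r r'] norm_ge_zero[of "cross3 r r'"] by (simp add: power2_eq_1_iff)

lemma dir_lemma:
  assumes "norm r = 1" "norm r' = 1" "r' \<bullet> r = 0" "r \<bullet> d = 0" "r' \<bullet> d = 0"
  shows "d = (cross3 r r' \<bullet> d) *\<^sub>R cross3 r r'"
proof -
  let ?n = "cross3 r r'"
  have nn: "?n \<bullet> ?n = 1" using norm_cross1[of r r'] assms by (simp add: norm_eq_1 inner_commute)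
  have "cross3 ?n d = - cross3 d ?n" by (rule cross_skew)
  also have "\<dots> = 0" using assms by (simp add: Lagrange inner_commute)
  finally have nd: "cross3 ?n d = 0" .
  have "cross3 ?n (cross3 ?n d) = (?n \<bullet> d) *\<^sub>R ?n - (?n \<bullet> ?n) *\<^sub>R d" by (rule Lagrange)
  hence "0 = (?n \<bullet> d) *\<^sub>R ?n - d" using nd nn by simp
  thus ?thesis by simp
qed

theorem mainTheorem2:
  fixes m1 m2 m3 :: "real^3" and t1 t2 t3 t4 :: real
  assumes "lin_indep2 m1 m3" and "lin_indep2 m2 m3"
  shows "(\<exists>!(K1, K2, r1, r2, r3, s1, s2, s3, s4).
            upper_pos K1 \<and> upper_pos K2 \<and>
            norm r1 = 1 \<and> norm r2 = 1 \<and> norm r3 = 1 \<and>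
            r3 \<bullet> r1 = 0 \<and> r3 \<bullet> r2 = 0 \<and>
            cam_mat m1 t1 m3 t3 = K1 ** cam_mat r1 s1 r3 s3 \<and>
            cam_mat m2 t2 m3 t4 = K2 ** cam_mat r2 s2 r3 s4)
       \<and> (skew_slits (cam_mat m1 t1 m3 t3) (cam_mat m2 t2 m3 t4) \<longrightarrow>
          (\<forall>K1 K2 r1 r2 r3 s1 s2 s3 s4.
             upper_pos K1 \<and> upper_pos K2 \<and>
             norm r1 = 1 \<and> norm r2 = 1 \<and> norm r3 = 1 \<and>
             r3 \<bullet> r1 = 0 \<and> r3 \<bullet> r2 = 0 \<and>
             cam_mat m1 t1 m3 t3 = K1 ** cam_mat r1 s1 r3 s3 \<and>
             cam_mat m2 t2 m3 t4 = K2 ** cam_mat r2 s2 r3 s4 \<longrightarrow>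
             (\<forall>p\<in>finite_pts (cam_mat m1 t1 m3 t3). \<forall>q\<in>finite_pts (cam_mat m1 t1 m3 t3).
                 \<exists>c. p - q = c *\<^sub>R cross3 r1 r3) \<and>
             (\<forall>p\<in>finite_pts (cam_mat m2 t2 m3 t4). \<forall>q\<in>finite_pts (cam_mat m2 t2 m3 t4).
                 \<exists>c. p - q = c *\<^sub>R cross3 r2 r3) \<and>
             vec_angle (cross3 r1 r3) (cross3 r2 r3) = arccos (r1 \<bullet> r2) \<and>
             setdist (finite_pts (cam_mat m1 t1 m3 t3)) (finite_pts (cam_mat m2 t2 m3 t4))
               = \<bar>s4 - s3\<bar>))"
proof -
  obtain KK1 R1 S1 where C1: "\<And>K r r' s s'. (upper_pos K \<and> norm r = 1 \<and> norm r' = 1 \<and> r' \<bullet> r = 0 \<and>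
          cam_mat m1 t1 m3 t3 = K ** cam_mat r s r' s') \<longleftrightarrow>
         (K = KK1 \<and> r = R1 \<and> r' = (1 / norm m3) *\<^sub>R m3 \<and> s = S1 \<and> s' = t3 / norm m3)"
    using one_cam'[OF assms(1), of t1 t3] by blast
  obtain KK2 R2 S2 where C2: "\<And>K r r' s s'. (upper_pos K \<and> norm r = 1 \<and> norm r' = 1 \<and> r' \<bullet> r = 0 \<and>
          cam_mat m2 t2 m3 t4 = K ** cam_mat r s r' s') \<longleftrightarrow>
         (K = KK2 \<and> r = R2 \<and> r' = (1 / norm m3) *\<^sub>R m3 \<and> s = S2 \<and> s' = t4 / norm m3)"
    using one_cam'[OF assms(2), of t2 t4] by blast
  let ?R3 = "(1 / norm m3) *\<^sub>R m3"
  have key: "(upper_pos K1 \<and> upper_pos K2 \<and>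
            norm r1 = 1 \<and> norm r2 = 1 \<and> norm r3 = 1 \<and>
            r3 \<bullet> r1 = 0 \<and> r3 \<bullet> r2 = 0 \<and>
            cam_mat m1 t1 m3 t3 = K1 ** cam_mat r1 s1 r3 s3 \<and>
            cam_mat m2 t2 m3 t4 = K2 ** cam_mat r2 s2 r3 s4) \<longleftrightarrow>
         (K1, K2, r1, r2, r3, s1, s2, s3, s4) = (KK1, KK2, R1, R2, ?R3, S1, S2, t3 / norm m3, t4 / norm m3)"
    for K1 K2 r1 r2 r3 s1 s2 s3 s4
    using C1[of K1 r1 r3 s1 s3] C2[of K2 r2 r3 s2 s4] by auto
  show ?thesis
  proof
    show "\<exists>!(K1, K2, r1, r2, r3, s1, s2, s3, s4).
            upper_pos K1 \<and> upper_pos K2 \<and>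
            norm r1 = 1 \<and> norm r2 = 1 \<and> norm r3 = 1 \<and>
            r3 \<bullet> r1 = 0 \<and> r3 \<bullet> r2 = 0 \<and>
            cam_mat m1 t1 m3 t3 = K1 ** cam_mat r1 s1 r3 s3 \<and>
            cam_mat m2 t2 m3 t4 = K2 ** cam_mat r2 s2 r3 s4"
      apply (rule ex1I[where a="(KK1, KK2, R1, R2, ?R3, S1, S2, t3 / norm m3, t4 / norm m3)"])
       apply (simp only: split key)
      apply (clarsimp simp only: split key)
      done
  next
    show "skew_slits (cam_mat m1 t1 m3 t3) (cam_mat m2 t2 m3 t4) \<longrightarrow>
          (\<forall>K1 K2 r1 r2 r3 s1 s2 s3 s4.
             upper_pos K1 \<and> upper_pos K2 \<and>
             norm r1 = 1 \<and> norm r2 = 1 \<and> norm r3 = 1 \<and>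
             r3 \<bullet> r1 = 0 \<and> r3 \<bullet> r2 = 0 \<and>
             cam_mat m1 t1 m3 t3 = K1 ** cam_mat r1 s1 r3 s3 \<and>
             cam_mat m2 t2 m3 t4 = K2 ** cam_mat r2 s2 r3 s4 \<longrightarrow>
             (\<forall>p\<in>finite_pts (cam_mat m1 t1 m3 t3). \<forall>q\<in>finite_pts (cam_mat m1 t1 m3 t3).
                 \<exists>c. p - q = c *\<^sub>R cross3 r1 r3) \<and>
             (\<forall>p\<in>finite_pts (cam_mat m2 t2 m3 t4). \<forall>q\<in>finite_pts (cam_mat m2 t2 m3 t4).
                 \<exists>c. p - q = c *\<^sub>R cross3 r2 r3) \<and>
             vec_angle (cross3 r1 r3) (cross3 r2 r3) = arccos (r1 \<bullet> r2) \<and>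
             setdist (finite_pts (cam_mat m1 t1 m3 t3)) (finite_pts (cam_mat m2 t2 m3 t4))
               = \<bar>s4 - s3\<bar>)"
    proof (intro impI allI)
      fix K1 K2 r1 r2 r3 s1 s2 s3 s4
      assume sk: "skew_slits (cam_mat m1 t1 m3 t3) (cam_mat m2 t2 m3 t4)"
      assume H: "upper_pos K1 \<and> upper_pos K2 \<and>
             norm r1 = 1 \<and> norm r2 = 1 \<and> norm r3 = 1 \<and>
             r3 \<bullet> r1 = 0 \<and> r3 \<bullet> r2 = 0 \<and>
             cam_mat m1 t1 m3 t3 = K1 ** cam_mat r1 s1 r3 s3 \<and>
             cam_mat m2 t2 m3 t4 = K2 ** cam_mat r2 s2 r3 s4"
      hence u1: "upper_pos K1" and u2: "upper_pos K2" and n1: "norm r1 = 1" and n2: "norm r2 = 1"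
        and n3: "norm r3 = 1" and o1: "r3 \<bullet> r1 = 0" and o2: "r3 \<bullet> r2 = 0"
        and e1: "cam_mat m1 t1 m3 t3 = K1 ** cam_mat r1 s1 r3 s3"
        and e2: "cam_mat m2 t2 m3 t4 = K2 ** cam_mat r2 s2 r3 s4" by auto
      have F1: "finite_pts (cam_mat m1 t1 m3 t3) = {X. r1 \<bullet> X + s1 = 0 \<and> r3 \<bullet> X + s3 = 0}"
        by (rule fp_eq[OF u1 e1])
      have F2: "finite_pts (cam_mat m2 t2 m3 t4) = {X. r2 \<bullet> X + s2 = 0 \<and> r3 \<bullet> X + s4 = 0}"
        by (rule fp_eq[OF u2 e2])
      have D1: "\<forall>p\<in>finite_pts (cam_mat m1 t1 m3 t3). \<forall>q\<in>finite_pts (cam_mat m1 t1 m3 t3).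
                 \<exists>c. p - q = c *\<^sub>R cross3 r1 r3"
      proof (intro ballI)
        fix p q assume "p \<in> finite_pts (cam_mat m1 t1 m3 t3)" "q \<in> finite_pts (cam_mat m1 t1 m3 t3)"
        hence "r1 \<bullet> (p - q) = 0" "r3 \<bullet> (p - q) = 0" unfolding F1 by (auto simp: inner_diff_right)
        thus "\<exists>c. p - q = c *\<^sub>R cross3 r1 r3" using dir_lemma[OF n1 n3 o1] by blast
      qed
      have D2: "\<forall>p\<in>finite_pts (cam_mat m2 t2 m3 t4). \<forall>q\<in>finite_pts (cam_mat m2 t2 m3 t4).
                 \<exists>c. p - q = c *\<^sub>R cross3 r2 r3"
      proof (intro ballI)
        fix p q assume "p \<in> finite_pts (cam_mat m2 t2 m3 t4)" "q \<in> finite_pts (cam_mat m2 t2 m3 t4)"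
        hence "r2 \<bullet> (p - q) = 0" "r3 \<bullet> (p - q) = 0" unfolding F2 by (auto simp: inner_diff_right)
        thus "\<exists>c. p - q = c *\<^sub>R cross3 r2 r3" using dir_lemma[OF n2 n3 o2] by blast
      qed
      have o1': "r1 \<bullet> r3 = 0" "r2 \<bullet> r3 = 0" using o1 o2 by (auto simp: inner_commute)
      have A: "vec_angle (cross3 r1 r3) (cross3 r2 r3) = arccos (r1 \<bullet> r2)"
        unfolding vec_angle_def using norm_cross1[OF n1 n3 o1'(1)] norm_cross1[OF n2 n3 o1'(2)]
        by (simp add: dot_cross o1' n3 inner_commute[of r3 r2] norm_eq_1[THEN iffD1, OF n3])
      let ?n = "cross3 r1 r3"
      have r2n: "r2 \<bullet> ?n \<noteq> 0"
      proof
        assume z: "r2 \<bullet> ?n = 0"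
        have nz: "?n \<noteq> 0" using norm_cross1[OF n1 n3 o1'(1)] by auto
        have "ext4 ?n 0 \<in> null_space (cam_mat m1 t1 m3 t3)"
          by (rule ns_mem[OF u1 e1]) (simp_all add: dot_cross_self)
        moreover have "ext4 ?n 0 \<in> null_space (cam_mat m2 t2 m3 t4)"
          by (rule ns_mem[OF u2 e2]) (simp_all add: dot_cross_self z)
        ultimately show False using sk ext4_nz[OF nz] unfolding skew_slits_def by blast
      qed
      define lam where "lam = (s1 * (r1 \<bullet> r2) - s2) / (r2 \<bullet> ?n)"
      define p where "p = (- s1) *\<^sub>R r1 + (- s3) *\<^sub>R r3 + lam *\<^sub>R ?n"
      define q where "q = p + (s3 - s4) *\<^sub>R r3"
      have r11: "r1 \<bullet> r1 = 1" "r3 \<bullet> r3 = 1" using n1 n3 by (simp_all add: norm_eq_1)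
      have lamn: "lam * (r2 \<bullet> ?n) = s1 * (r1 \<bullet> r2) - s2" unfolding lam_def using r2n by simp
      have ex: "v \<bullet> p = - s1 * (v \<bullet> r1) - s3 * (v \<bullet> r3) + lam * (v \<bullet> ?n)" for v
        unfolding p_def by (simp add: inner_add_right inner_diff_right)
      have r1p: "r1 \<bullet> p = -s1" "r3 \<bullet> p = -s3" "r2 \<bullet> p = -s2"
        using ex[of r1] ex[of r3] ex[of r2] r11 o1 o1' lamn
        by (simp_all add: dot_cross_self inner_commute[of r2 r1])
      have pin: "p \<in> finite_pts (cam_mat m1 t1 m3 t3)" unfolding F1 using r1p by simp
      have qin: "q \<in> finite_pts (cam_mat m2 t2 m3 t4)" unfolding F2 q_def
        using r1p r11 o1' by (simp add: inner_add_right)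
      have dpq: "dist p q = \<bar>s4 - s3\<bar>" unfolding q_def dist_norm using n3 by simp
      have S: "setdist (finite_pts (cam_mat m1 t1 m3 t3)) (finite_pts (cam_mat m2 t2 m3 t4)) = \<bar>s4 - s3\<bar>"
      proof (rule antisym)
        show "setdist (finite_pts (cam_mat m1 t1 m3 t3)) (finite_pts (cam_mat m2 t2 m3 t4)) \<le> \<bar>s4 - s3\<bar>"
          using setdist_le_dist[OF pin qin] dpq by simp
        show "\<bar>s4 - s3\<bar> \<le> setdist (finite_pts (cam_mat m1 t1 m3 t3)) (finite_pts (cam_mat m2 t2 m3 t4))"
        proof (rule le_setdistI)
          fix x y assume "x \<in> finite_pts (cam_mat m1 t1 m3 t3)" "y \<in> finite_pts (cam_mat m2 t2 m3 t4)"
          hence "r3 \<bullet> (x - y) = s4 - s3" unfolding F1 F2 by (auto simp: inner_diff_right)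
          moreover have "\<bar>r3 \<bullet> (x - y)\<bar> \<le> norm r3 * norm (x - y)" by (rule Cauchy_Schwarz_ineq2)
          ultimately show "\<bar>s4 - s3\<bar> \<le> dist x y" using n3 by (simp add: dist_norm)
        qed (use pin qin in auto)
      qed
      show "(\<forall>p\<in>finite_pts (cam_mat m1 t1 m3 t3). \<forall>q\<in>finite_pts (cam_mat m1 t1 m3 t3).
                 \<exists>c. p - q = c *\<^sub>R cross3 r1 r3) \<and>
             (\<forall>p\<in>finite_pts (cam_mat m2 t2 m3 t4). \<forall>q\<in>finite_pts (cam_mat m2 t2 m3 t4).
                 \<exists>c. p - q = c *\<^sub>R cross3 r2 r3) \<and>
             vec_angle (cross3 r1 r3) (cross3 r2 r3) = arccos (r1 \<bullet> r2) \<and>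
             setdist (finite_pts (cam_mat m1 t1 m3 t3)) (finite_pts (cam_mat m2 t2 m3 t4))
               = \<bar>s4 - s3\<bar>"
        using D1 D2 A S by blast
    qed
  qed
qed

end
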